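(* Let $a \in \mathbb{R}$ and $w \in \mathbb{C}$. Then: (I) $T(a,w) = (0,\infty)$ if and only if $a \ge |w|$ and $a > \operatorname{Re}(w)$. (II) $T(a,w)$ is a nonempty proper subset of $(0,\infty)$ if and only if $w \neq 0$ and $\operatorname{Re}(w) < a < |w|$. In this case $T(a,w) = (0, \tau_c(a,w))$, where $$\tau_c(a,w) = \frac{1}{\sqrt{|w|^2-a^2}}\left[|\operatorname{Arg}(w)| - \arccos\left(\frac{a}{|w|}\right)\right] = \frac{1}{\sqrt{|w|^2-a^2}}\left[|\operatorname{Arg}(w)| - \operatorname{arccot}\left(\frac{a}{\sqrt{|w|^2-a^2}}\right)\right] > 0.$$ (III) $T(a,w) = \emptyset$ if and only if $a \le \operatorname{Re}(w)$.
   Context: For $a, w \in \mathbb{C}$, $T(a,w)$ denotes the set of all $\tau > 0$ such that every root $z \in \mathbb{C}$ of $z + a - w e^{-\tau z} = 0$ has negative real part. $\operatorname{Arg}(w) \in (-\pi,\pi]$ is the principal argument of $w \neq 0$; $\arccos : [-1,1] \to [0,\pi]$ is the inverse of $\cos|_{[0,\pi]}$; $\operatorname{arccot}: \mathbb{R} \to (0,\pi)$ is the inverse of $\cot|_{(0,\pi)}$. *)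

theory Defs
  imports "HOL-Analysis.Analysis"
begin

definition stab_delays :: "complex \<Rightarrow> complex \<Rightarrow> real set" where
  "stab_delays a w = {\<tau>. \<tau> > 0 \<and>
     (\<forall>z::complex. z + a - w * exp (- (complex_of_real \<tau>) * z) = 0 \<longrightarrow> Re z < 0)}"

definition arccot :: "real \<Rightarrow> real" where
  "arccot x = (THE y. 0 < y \<and> y < pi \<and> cot y = x)"

end

theory Submission
  imports Defs
begin

lemma G_deriv:
  fixes r a \<tau> x :: real
  assumes r: "r > 0" and t: "\<tau> > 0" and lt: "\<bar>x + a\<bar> < r * exp (-\<tau>*x)"
  shows "((\<lambda>x. arccos ((x+a)/(r*exp(-\<tau>*x))) + \<tau> * sqrt ((r*exp(-\<tau>*x))^2 - (x+a)^2))
          has_real_derivative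
          (- (1 + 2*\<tau>*(x+a) + \<tau>^2*(r*exp(-\<tau>*x))^2) / sqrt ((r*exp(-\<tau>*x))^2 - (x+a)^2))) (at x)"
proof -
  define \<rho> where "\<rho> = r*exp(-\<tau>*x)"
  define q where "q = x + a"
  have rho: "\<rho> > 0" using r by (simp add: \<rho>_def)
  have qr: "\<bar>q\<bar> < \<rho>" using lt by (simp add: \<rho>_def q_def)
  have u1: "-1 < q/\<rho>" "q/\<rho> < 1" using qr rho by (auto simp: field_simps abs_less_iff)
  have Ypos: "\<rho>^2 - q^2 > 0" using qr rho
    by (metis abs_le_self_iff abs_of_pos diff_gt_0_iff_gt linorder_not_le order_le_less power2_le_iff_abs_le)
  define Y where "Y = sqrt (\<rho>^2 - q^2)"
  have Y: "Y > 0" using Ypos by (simp add: Y_def)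
  have YY: "Y^2 = \<rho>^2 - q^2" using Ypos by (simp add: Y_def)
  have s1: "sqrt (1 - (q/\<rho>)^2) = Y / \<rho>"
  proof -
    have "1 - (q/\<rho>)^2 = (Y/\<rho>)^2" using rho YY by (simp add: field_simps)
    then show ?thesis using Y rho by simp
  qed
  have du: "((\<lambda>x. (x+a)/(r*exp(-\<tau>*x))) has_real_derivative (1 + \<tau>*q)/\<rho>) (at x)"
    apply (rule derivative_eq_intros refl)+
    using r apply simp
    using r by (simp add: \<rho>_def q_def field_simps)
  have dv: "((\<lambda>x. (r*exp(-\<tau>*x))^2 - (x+a)^2) has_real_derivative (-2*\<tau>*\<rho>^2 - 2*q)) (at x)"
    apply (rule derivative_eq_intros refl)+
    by (simp add: \<rho>_def q_def field_simps power2_eq_square)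
  have d1: "((\<lambda>x. arccos ((x+a)/(r*exp(-\<tau>*x)))) has_real_derivative
      inverse (- sqrt (1 - (q/\<rho>)\<^sup>2)) * ((1 + \<tau>*q)/\<rho>)) (at x)"
    unfolding \<rho>_def q_def
    by (rule DERIV_arccos[THEN DERIV_chain2, OF _ _ du[unfolded \<rho>_def q_def]]) (use u1 in \<open>simp_all add: \<rho>_def q_def\<close>)
  have d2: "((\<lambda>x. sqrt ((r*exp(-\<tau>*x))^2 - (x+a)^2)) has_real_derivative
      inverse (sqrt (\<rho>^2 - q^2)) / 2 * (-2*\<tau>*\<rho>^2 - 2*q)) (at x)"
    unfolding \<rho>_def q_def
    by (rule DERIV_real_sqrt[THEN DERIV_chain2, OF _ dv[unfolded \<rho>_def q_def]]) (use Ypos in \<open>simp add: \<rho>_def q_def\<close>)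
  have "((\<lambda>x. arccos ((x+a)/(r*exp(-\<tau>*x))) + \<tau> * sqrt ((r*exp(-\<tau>*x))^2 - (x+a)^2))
          has_real_derivative
      inverse (- sqrt (1 - (q/\<rho>)\<^sup>2)) * ((1 + \<tau>*q)/\<rho>) + \<tau> * (inverse (sqrt (\<rho>^2 - q^2)) / 2 * (-2*\<tau>*\<rho>^2 - 2*q))) (at x)"
    by (intro DERIV_add DERIV_cmult d1 d2)
  moreover have "inverse (- sqrt (1 - (q/\<rho>)\<^sup>2)) * ((1 + \<tau>*q)/\<rho>) + \<tau> * (inverse (sqrt (\<rho>^2 - q^2)) / 2 * (-2*\<tau>*\<rho>^2 - 2*q))
     = - (1 + 2*\<tau>*q + \<tau>^2*\<rho>^2) / Y"
    unfolding s1 Y_def[symmetric] using Y rho by (simp add: field_simps power2_eq_square)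
  ultimately show ?thesis by (simp add: \<rho>_def q_def Y_def)
qed

definition Fc :: "real \<Rightarrow> real \<Rightarrow> real \<Rightarrow> real \<Rightarrow> real" where
  "Fc r a \<tau> x = arccos (max (-1) (min 1 ((x+a)/(r*exp(-\<tau>*x))))) + \<tau> * sqrt (max 0 ((r*exp(-\<tau>*x))^2 - (x+a)^2))"

lemma Fc_cont: "r > 0 \<Longrightarrow> continuous_on S (Fc r a \<tau>)"
  unfolding Fc_def by (intro continuous_intros) auto

lemma Fc_eq:
  assumes r: "r > 0" and "\<bar>x + a\<bar> \<le> r * exp (-\<tau>*x)"
  shows "Fc r a \<tau> x = arccos ((x+a)/(r*exp(-\<tau>*x))) + \<tau> * sqrt ((r*exp(-\<tau>*x))^2 - (x+a)^2)"
proof -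
  have p: "r * exp (-\<tau>*x) > 0" using r by simp
  have "-1 \<le> (x+a)/(r*exp(-\<tau>*x))" "(x+a)/(r*exp(-\<tau>*x)) \<le> 1"
    using assms(2) p by (auto simp: field_simps abs_le_iff)
  moreover have "(x+a)^2 \<le> (r*exp(-\<tau>*x))^2"
    using power_mono[OF assms(2) abs_ge_zero, of 2] by simp
  ultimately show ?thesis unfolding Fc_def by simp
qed

lemma Fc_mvt:
  assumes r: "r > 0" and t: "\<tau> > 0" and cd: "c \<le> d"
    and int: "\<And>x. c < x \<Longrightarrow> x < d \<Longrightarrow> \<bar>x + a\<bar> < r * exp (-\<tau>*x)"
  shows "Fc r a \<tau> d \<le> Fc r a \<tau> c"
proof (rule DERIV_nonpos_imp_decreasing_open[OF cd])
  show "continuous_on {c..d} (Fc r a \<tau>)" using Fc_cont r by blast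
  fix x assume x: "c < x" "x < d"
  have D: "((\<lambda>x. arccos ((x+a)/(r*exp(-\<tau>*x))) + \<tau> * sqrt ((r*exp(-\<tau>*x))^2 - (x+a)^2))
          has_real_derivative
          (- (1 + 2*\<tau>*(x+a) + \<tau>^2*(r*exp(-\<tau>*x))^2) / sqrt ((r*exp(-\<tau>*x))^2 - (x+a)^2))) (at x)"
    by (rule G_deriv[OF r t int[OF x]])
  have D': "(Fc r a \<tau> has_real_derivative
          (- (1 + 2*\<tau>*(x+a) + \<tau>^2*(r*exp(-\<tau>*x))^2) / sqrt ((r*exp(-\<tau>*x))^2 - (x+a)^2))) (at x)"
  proof (rule has_field_derivative_transform_within_open[OF D, of "{c<..<d}"])
    show "x \<in> {c<..<d}" using x by simp
    fix y assume "y \<in> {c<..<d}"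
    then have "\<bar>y + a\<bar> \<le> r * exp (-\<tau>*y)" using int by (simp add: less_imp_le)
    then show "arccos ((y+a)/(r*exp(-\<tau>*y))) + \<tau> * sqrt ((r*exp(-\<tau>*y))^2 - (y+a)^2) = Fc r a \<tau> y"
      using Fc_eq[OF r] by simp
  qed simp
  have "(1 + \<tau>*(x+a))^2 \<ge> 0" by simp
  moreover have sq: "(x+a)^2 \<le> (r*exp(-\<tau>*x))^2" using power_mono[OF less_imp_le[OF int[OF x]] abs_ge_zero, of 2] by simp
  moreover have "\<tau>^2 * (x+a)^2 \<le> \<tau>^2*(r*exp(-\<tau>*x))^2"
    using sq by (simp add: mult_left_mono)
  moreover have "(1 + \<tau>*(x+a))^2 = 1 + 2*\<tau>*(x+a) + \<tau>^2 * (x+a)^2"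
    by (simp add: power2_eq_square algebra_simps)
  ultimately have "1 + 2*\<tau>*(x+a) + \<tau>^2*(r*exp(-\<tau>*x))^2 \<ge> 0"
    by linarith
  moreover have "sqrt ((r*exp(-\<tau>*x))^2 - (x+a)^2) \<ge> 0"
    using sq by simp
  ultimately have "(- (1 + 2*\<tau>*(x+a) + \<tau>^2*(r*exp(-\<tau>*x))^2) / sqrt ((r*exp(-\<tau>*x))^2 - (x+a)^2)) \<le> 0"
    by (intro divide_nonpos_nonneg) auto
  with D' show "\<exists>y. (Fc r a \<tau> has_real_derivative y) (at x) \<and> y \<le> 0" by blast
qed

lemma Fc_pi:
  assumes r: "r > 0" and "x + a \<le> - (r * exp (-\<tau>*x))"
  shows "Fc r a \<tau> x = pi"
proof -
  have p: "r * exp (-\<tau>*x) > 0" using r by simp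
  have "(x+a)/(r*exp(-\<tau>*x)) \<le> -1" using assms(2) p by (simp add: field_simps)
  moreover have "(r*exp(-\<tau>*x))^2 \<le> (x+a)^2"
  proof -
    have "r*exp(-\<tau>*x) \<le> \<bar>x+a\<bar>" using assms(2) by linarith
    from power_mono[OF this, of 2] p show ?thesis by simp
  qed
  ultimately show ?thesis unfolding Fc_def by simp
qed

lemma g_strict:
  fixes r \<tau> x y a :: real
  assumes r: "r > 0" and t: "\<tau> > 0" and "x < y"
  shows "x + a - r * exp (-\<tau>*x) < y + a - r * exp (-\<tau>*y)"
proof -
  have "\<tau>*x < \<tau>*y" using t assms(3) by (simp add: mult_strict_left_mono)
  then have "exp (-\<tau>*y) < exp (-\<tau>*x)" by simp
  then have "r * exp (-\<tau>*y) < r * exp (-\<tau>*x)" using r by simp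
  then show ?thesis using assms(3) by linarith
qed

lemma Fc_mono:
  assumes r: "r > 0" and t: "\<tau> > 0" and a: "a > -r" and x0: "x0 \<ge> 0"
    and root: "\<bar>x0 + a\<bar> \<le> r * exp (-\<tau>*x0)"
  shows "Fc r a \<tau> x0 \<le> Fc r a \<tau> 0"
proof -
  have lt: "x + a < r * exp (-\<tau>*x)" if "x < x0" for x
    using g_strict[OF r t that, of a] root by linarith
  define S where "S = {0..x0} \<inter> {x. x + a + r * exp (-\<tau>*x) \<le> 0}"
  show ?thesis
  proof (cases "S = {}")
    case True
    show ?thesis
    proof (rule Fc_mvt[OF r t x0])
      fix x assume x: "0 < x" "x < x0"
      then have "x \<notin> S" using True by simp
      then have "x + a + r * exp (-\<tau>*x) > 0" using x by (auto simp: S_def)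
      then show "\<bar>x + a\<bar> < r * exp (-\<tau>*x)" using lt[OF x(2)] by linarith
    qed
  next
    case False
    have cl: "closed S" unfolding S_def
      by (intro closed_Int closed_atLeastAtMost closed_Collect_le continuous_intros)
    have bb: "bdd_below S" "bdd_above S" unfolding S_def by (auto intro: bdd_belowI bdd_aboveI)
    define xs where "xs = Inf S"
    define xe where "xe = Sup S"
    have xsS: "xs \<in> S" using closed_contains_Inf[OF False bb(1) cl] by (simp add: xs_def)
    have xeS: "xe \<in> S" using closed_contains_Sup[OF False bb(2) cl] by (simp add: xe_def)
    have Fxs: "Fc r a \<tau> xs = pi" using xsS by (intro Fc_pi[OF r]) (auto simp: S_def)
    have Fxe: "Fc r a \<tau> xe = pi" using xeS by (intro Fc_pi[OF r]) (auto simp: S_def)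
    have "Fc r a \<tau> xs \<le> Fc r a \<tau> 0"
    proof (rule Fc_mvt[OF r t])
      show "0 \<le> xs" using xsS by (simp add: S_def)
      fix x assume x: "0 < x" "x < xs"
      have "x \<notin> S"
      proof
        assume "x \<in> S" then have "xs \<le> x" unfolding xs_def by (rule cInf_lower[OF _ bb(1)])
        with x show False by simp
      qed
      moreover have "x \<le> x0" using x xsS by (simp add: S_def)
      ultimately have "x + a + r * exp (-\<tau>*x) > 0" using x by (auto simp: S_def)
      moreover have "x < x0" using x xsS by (simp add: S_def)
      ultimately show "\<bar>x + a\<bar> < r * exp (-\<tau>*x)" using lt by force
    qed
    moreover have "Fc r a \<tau> x0 \<le> Fc r a \<tau> xe"
    proof (rule Fc_mvt[OF r t])
      show "xe \<le> x0" using xeS by (simp add: S_def)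
      fix x assume x: "xe < x" "x < x0"
      have "x \<notin> S"
      proof
        assume "x \<in> S" then have "x \<le> xe" unfolding xe_def by (rule cSup_upper[OF _ bb(2)])
        with x show False by simp
      qed
      moreover have "0 \<le> x" using x xeS by (simp add: S_def)
      ultimately have "x + a + r * exp (-\<tau>*x) > 0" using x by (auto simp: S_def)
      then show "\<bar>x + a\<bar> < r * exp (-\<tau>*x)" using lt[OF x(2)] by linarith
    qed
    ultimately show ?thesis using Fxs Fxe by simp
  qed
qed

lemma root_polar:
  fixes x Y r \<phi> \<tau> a :: real
  assumes r: "r > 0" and q: "\<bar>x + a\<bar> \<le> r * exp (-\<tau>*x)"
    and Y: "Y = sqrt ((r*exp(-\<tau>*x))^2 - (x+a)^2)"
    and eq: "arccos ((x+a)/(r*exp(-\<tau>*x))) + \<tau> * Y = \<phi>"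
  shows "Complex x Y + complex_of_real a - complex_of_real r * cis \<phi> * exp (- complex_of_real \<tau> * Complex x Y) = 0"
proof -
  define \<rho> where "\<rho> = r*exp(-\<tau>*x)"
  define u where "u = (x+a)/\<rho>"
  define \<psi> where "\<psi> = arccos u"
  have rho: "\<rho> > 0" using r by (simp add: \<rho>_def)
  have u1: "-1 \<le> u" "u \<le> 1" using q rho by (auto simp: u_def \<rho>_def field_simps abs_le_iff)
  have cpsi: "\<rho> * cos \<psi> = x + a" using u1 rho by (simp add: \<psi>_def u_def)
  have spsi: "\<rho> * sin \<psi> = Y"
  proof -
    have "\<rho> * sin \<psi> = \<rho> * sqrt (1 - u^2)" using u1 by (simp add: \<psi>_def sin_arccos)
    also have "\<dots> = sqrt (\<rho>^2 * (1 - u^2))" using rho by (simp add: real_sqrt_mult)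
    also have "\<rho>^2 * (1 - u^2) = \<rho>^2 - (x+a)^2" using rho by (simp add: u_def field_simps power2_eq_square)
    finally show ?thesis by (simp add: Y \<rho>_def)
  qed
  have "complex_of_real r * cis \<phi> * exp (- complex_of_real \<tau> * Complex x Y)
      = complex_of_real r * cis \<phi> * (exp (-\<tau>*x) * cis (-\<tau>*Y))"
    by (simp add: exp_eq_polar)
  also have "\<dots> = complex_of_real \<rho> * (cis \<phi> * cis (-\<tau>*Y))"
    by (simp add: \<rho>_def mult_ac)
  also have "cis \<phi> * cis (-\<tau>*Y) = cis (\<phi> - \<tau>*Y)"
    by (simp add: cis_mult)
  also have "\<phi> - \<tau>*Y = \<psi>" using eq by (simp add: \<psi>_def u_def \<rho>_def)
  also have "complex_of_real \<rho> * cis \<psi> = Complex (x+a) Y"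
    using cpsi spsi by (simp add: complex_eq_iff)
  finally show ?thesis by (simp add: complex_eq_iff)
qed

lemma exist_root:
  fixes r \<phi> \<tau> a :: real
  assumes r: "r > 0" and p0: "0 \<le> \<phi>" and p1: "\<phi> \<le> pi" and t: "\<tau> > 0" and a: "a \<le> r"
    and F0: "\<phi> \<le> Fc r a \<tau> 0"
  shows "\<exists>z. Re z \<ge> 0 \<and> z + complex_of_real a - complex_of_real r * cis \<phi> * exp (- complex_of_real \<tau> * z) = 0"
proof -
  define g where "g x = x + a - r * exp (-\<tau>*x)" for x
  have gc: "continuous_on A g" for A unfolding g_def by (intro continuous_intros)
  have "g 0 \<le> 0" using a by (simp add: g_def)
  moreover have "0 \<le> g (r - a)"
  proof -
    have "exp (-\<tau>*(r-a)) \<le> 1" using t a by (simp add: mult_nonneg_nonneg)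
    then have "r * exp (-\<tau>*(r-a)) \<le> r" using r by simp
    then show ?thesis by (simp add: g_def)
  qed
  ultimately obtain xm where xm: "0 \<le> xm" "xm \<le> r - a" "g xm = 0"
    using IVT'[of g 0 0 "r - a", OF _ _ _ gc] a by auto
  have xmeq: "xm + a = r * exp (-\<tau>*xm)" using xm(3) by (simp add: g_def)
  have rpos: "r * exp (-\<tau>*y) > 0" for y using r by simp
  have Fxm: "Fc r a \<tau> xm = 0"
    using xmeq rpos[of xm] r by (simp add: Fc_def)
  obtain xs where xs: "0 \<le> xs" "xs \<le> xm" "Fc r a \<tau> xs = \<phi>"
    using IVT2'[of "Fc r a \<tau>" xm \<phi> 0, OF _ F0 xm(1) Fc_cont[OF r]] Fxm p0 by auto
  have up: "xs + a \<le> r * exp (-\<tau>*xs)"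
  proof (cases "xs = xm")
    case True then show ?thesis using xmeq by simp
  next
    case False
    then have "xs < xm" using xs by simp
    from g_strict[OF r t this, of a] xmeq show ?thesis by linarith
  qed
  show ?thesis
  proof (cases "- (r * exp (-\<tau>*xs)) \<le> xs + a")
    case True
    then have q: "\<bar>xs + a\<bar> \<le> r * exp (-\<tau>*xs)" using up by linarith
    define Y where "Y = sqrt ((r*exp(-\<tau>*xs))^2 - (xs+a)^2)"
    have "arccos ((xs+a)/(r*exp(-\<tau>*xs))) + \<tau> * Y = \<phi>"
      using xs(3) Fc_eq[OF r q] by (simp add: Y_def)
    from root_polar[OF r q Y_def this] show ?thesis
      using xs(1) by (intro exI[of _ "Complex xs Y"]) simp
  next
    case False
    then have "Fc r a \<tau> xs = pi" by (intro Fc_pi[OF r]) simp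
    then have phi: "\<phi> = pi" using xs by simp
    define m where "m x = x + a + r * exp (-\<tau>*x)" for x
    have mc: "continuous_on A m" for A unfolding m_def by (intro continuous_intros)
    have "m xs \<le> 0" using False by (simp add: m_def)
    moreover have "0 \<le> m xm" using xmeq rpos[of xm] by (simp add: m_def)
    ultimately obtain x1 where x1: "xs \<le> x1" "x1 \<le> xm" "m x1 = 0"
      using IVT'[of m xs 0 xm, OF _ _ _ mc] xs by auto
    show ?thesis
    proof (intro exI[of _ "complex_of_real x1"] conjI)
      show "0 \<le> Re (complex_of_real x1)" using x1 xs by simp
      have "exp (- complex_of_real \<tau> * complex_of_real x1) = complex_of_real (exp (-\<tau>*x1))"
        by (simp flip: exp_of_real)
      then show "complex_of_real x1 + complex_of_real a - complex_of_real r * cis \<phi> * exp (- complex_of_real \<tau> * complex_of_real x1) = 0"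
        using x1(3) phi by (simp add: m_def) (metis of_real_add of_real_mult of_real_eq_0_iff)
    qed
  qed
qed

lemma no_root:
  fixes r \<phi> \<tau> a :: real and z :: complex
  assumes r: "r > 0" and t: "\<tau> > 0" and a: "a > -r" and ph: "\<bar>\<phi>\<bar> \<le> pi"
    and F0: "Fc r a \<tau> 0 < \<bar>\<phi>\<bar>" and re: "Re z \<ge> 0" and im: "Im z \<ge> 0"
    and root: "z + complex_of_real a - complex_of_real r * cis \<phi> * exp (- complex_of_real \<tau> * z) = 0"
  shows False
proof -
  define x where "x = Re z"
  define y where "y = Im z"
  define \<rho> where "\<rho> = r * exp (-\<tau>*x)"
  define \<theta> where "\<theta> = \<phi> - \<tau>*y"
  have rho: "\<rho> > 0" using r by (simp add: \<rho>_def)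
  have "z + complex_of_real a = complex_of_real r * cis \<phi> * exp (- complex_of_real \<tau> * z)"
    using root by simp
  also have "\<dots> = complex_of_real r * cis \<phi> * (exp (-\<tau>*x) * cis (-\<tau>*y))"
    by (simp add: exp_eq_polar x_def y_def)
  also have "\<dots> = complex_of_real \<rho> * (cis \<phi> * cis (-\<tau>*y))"
    by (simp add: \<rho>_def mult_ac)
  also have "cis \<phi> * cis (-\<tau>*y) = cis \<theta>"
    by (simp add: cis_mult \<theta>_def)
  finally have eq: "z + complex_of_real a = complex_of_real \<rho> * cis \<theta>" .
  have c: "x + a = \<rho> * cos \<theta>" using arg_cong[OF eq, of Re] by (simp add: x_def)
  have s: "y = \<rho> * sin \<theta>" using arg_cong[OF eq, of Im] by (simp add: y_def)
  have sinpos: "sin \<theta> \<ge> 0" using s im rho by (simp add: y_def zero_le_mult_iff)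
  have q: "\<bar>x + a\<bar> \<le> \<rho>" using c rho abs_cos_le_one[of \<theta>]
    by (simp add: abs_mult)
  have u: "(x+a)/\<rho> = cos \<theta>" using c rho by simp
  have Y: "sqrt (\<rho>^2 - (x+a)^2) = y"
  proof -
    have "\<rho>^2 - (x+a)^2 = y^2" using c s by (simp add: power_mult_distrib sin_squared_eq algebra_simps)
    then show ?thesis using im by (simp add: y_def)
  qed
  define \<psi> where "\<psi> = arccos (cos \<theta>)"
  have cps: "cos \<psi> = cos \<theta>" by (simp add: \<psi>_def)
  have sps: "sin \<psi> = sin \<theta>"
    using sinpos by (simp add: \<psi>_def sin_arccos sin_cos_sqrt[symmetric])
  have "cos (\<psi> - \<theta>) = 1"
    using cps sps by (simp add: cos_diff flip: power2_eq_square)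
  then obtain n :: int where n: "\<psi> - \<theta> = n * 2 * pi" by (auto simp: cos_one_2pi_int)
  have Fx: "Fc r a \<tau> x = \<psi> + \<tau> * y"
    using Fc_eq[OF r q[unfolded \<rho>_def]] u Y by (simp add: \<rho>_def \<psi>_def)
  have "Fc r a \<tau> x \<le> Fc r a \<tau> 0"
    by (rule Fc_mono[OF r t a]) (use re q in \<open>simp_all add: x_def \<rho>_def\<close>)
  moreover have "\<psi> \<ge> 0" unfolding \<psi>_def by (simp add: arccos_lbound)
  moreover have "\<tau> * y \<ge> 0" using im t by (simp add: y_def)
  moreover have "Fc r a \<tau> x = \<phi> + n * 2 * pi" using Fx n unfolding \<theta>_def by (simp add: algebra_simps)
  ultimately have bnd: "0 \<le> \<phi> + n * 2 * pi" "\<phi> + n * 2 * pi < \<bar>\<phi>\<bar>"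
    using F0 Fx by linarith+
  consider "n \<ge> 1" | "n \<le> -1" | "n = 0" by linarith
  then show False
  proof cases
    case 1 then have "real_of_int n \<ge> 1" by simp
    then have "n * 2 * pi \<ge> 2 * pi" by simp
    then show False using bnd ph by linarith
  next
    case 2 then have n1: "real_of_int n \<le> -1" by simp
    have "n * 2 * pi \<le> - 2 * pi" using mult_right_mono[OF n1, of "2*pi"] by simp
    then show False using bnd ph by linarith
  next
    case 3 then show False using bnd by simp
  qed
qed

lemma cot_char:
  fixes y c :: real
  assumes "0 < y" "y < pi" "cot y = c"
  shows "y = arccos (c / sqrt (1 + c^2))"
proof -
  have sp: "sin y > 0" using assms sin_gt_zero by blast
  have cy: "cos y = c * sin y" using assms(3) sp by (simp add: cot_def field_simps)
  have "sin y ^2 * (1 + c^2) = 1"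
    using sin_cos_squared_add[of y] cy by (simp add: power_mult_distrib algebra_simps)
  then have "(sin y * sqrt (1 + c^2))^2 = 1"
    by (simp add: power_mult_distrib add_nonneg_nonneg)
  moreover have "sin y * sqrt (1 + c^2) \<ge> 0"
    using sp by (simp add: add_nonneg_nonneg)
  ultimately have s1: "sin y * sqrt (1 + c^2) = 1"
    unfolding power2_eq_1_iff by linarith
  have sq: "sqrt (1 + c^2) > 0" by (simp add: add_pos_nonneg)
  have "cos y = c / sqrt (1 + c^2)"
    using cy s1 sq by (simp add: field_simps)
  then have "arccos (c / sqrt (1 + c^2)) = arccos (cos y)" by simp
  also have "\<dots> = y" using assms by (intro arccos_cos) auto
  finally show ?thesis by simp
qed

lemma arccot_eq:
  fixes a r :: real
  assumes r: "r > 0" and a1: "-r < a" and a2: "a < r"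
  shows "arccot (a / sqrt (r^2 - a^2)) = arccos (a / r)"
proof -
  define \<omega> where "\<omega> = sqrt (r^2 - a^2)"
  have rr: "r^2 - a^2 > 0"
  proof -
    have "r^2 - a^2 = (r-a)*(r+a)" by (simp add: power2_eq_square algebra_simps)
    moreover have "(r-a)*(r+a) > 0" using a1 a2 by simp
    ultimately show ?thesis by simp
  qed
  have w: "\<omega> > 0" using rr by (simp add: \<omega>_def)
  have u1: "-1 < a/r" "a/r < 1" using a1 a2 r by (auto simp: field_simps)
  define \<alpha> where "\<alpha> = arccos (a/r)"
  have al: "0 < \<alpha>" "\<alpha> < pi" using arccos_lt_bounded[OF u1] by (auto simp: \<alpha>_def)
  have "sin \<alpha> = sqrt (1 - (a/r)^2)" using u1 by (simp add: \<alpha>_def sin_arccos)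
  also have "1 - (a/r)^2 = (\<omega>/r)^2" using r rr by (simp add: \<omega>_def field_simps power_divide)
  finally have sa: "sin \<alpha> = \<omega> / r" using w r by simp
  have ca: "cos \<alpha> = a / r" using u1 by (simp add: \<alpha>_def)
  have sap: "sin \<alpha> > 0" using sa w r by simp
  have e1: "\<omega> = r * sin \<alpha>" using sa r by simp
  have e2: "a = r * cos \<alpha>" using ca r by simp
  have cota: "cot \<alpha> = a / \<omega>" unfolding e1 e2 cot_def using r by simp
  show ?thesis unfolding arccot_def \<omega>_def[symmetric] \<alpha>_def[symmetric]
  proof (rule the_equality)
    show "0 < \<alpha> \<and> \<alpha> < pi \<and> cot \<alpha> = a / \<omega>" using al cota by simp
    fix y assume "0 < y \<and> y < pi \<and> cot y = a / \<omega>"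
    then show "y = \<alpha>" using cot_char[of y "a/\<omega>"] cot_char[of \<alpha> "a/\<omega>"] al cota by auto
  qed
qed

lemma root_cnj:
  fixes a \<tau> :: real and z w :: complex
  assumes "z + complex_of_real a - w * exp (- complex_of_real \<tau> * z) = 0"
  shows "cnj z + complex_of_real a - cnj w * exp (- complex_of_real \<tau> * cnj z) = 0"
proof -
  have "cnj (z + complex_of_real a - w * exp (- complex_of_real \<tau> * z)) = 0" using assms by simp
  then show ?thesis by (simp add: exp_cnj)
qed

lemma w_polar: "w = complex_of_real (cmod w) * cis (Arg w)"
  using rcis_cmod_Arg[of w] by (simp add: rcis_def)

lemma wc_polar: "cnj w = complex_of_real (cmod w) * cis (- Arg w)"
  using rcis_cnj[of w] by (simp add: rcis_def)

lemma unstable_gen: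
  fixes a \<tau> :: real and w :: complex
  assumes w: "w \<noteq> 0" and t: "\<tau> > 0" and a: "a \<le> cmod w"
    and F0: "\<bar>Arg w\<bar> \<le> Fc (cmod w) a \<tau> 0"
  shows "\<exists>z. Re z \<ge> 0 \<and> z + complex_of_real a - w * exp (- complex_of_real \<tau> * z) = 0"
proof -
  have r: "cmod w > 0" using w by simp
  have b: "\<bar>Arg w\<bar> \<le> pi" using Arg_bounded[of w] by linarith
  show ?thesis
  proof (cases "Arg w \<ge> 0")
    case True
    then obtain z where z: "Re z \<ge> 0" "z + complex_of_real a - complex_of_real (cmod w) * cis (Arg w) * exp (- complex_of_real \<tau> * z) = 0"
      using exist_root[OF r _ _ t a, of "Arg w"] F0 b by auto
    then show ?thesis using w_polar[of w] by metis
  next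
    case False
    then obtain z where z: "Re z \<ge> 0" "z + complex_of_real a - complex_of_real (cmod w) * cis (- Arg w) * exp (- complex_of_real \<tau> * z) = 0"
      using exist_root[OF r _ _ t a, of "- Arg w"] F0 b by auto
    then have "z + complex_of_real a - cnj w * exp (- complex_of_real \<tau> * z) = 0"
      using wc_polar[of w] by metis
    from root_cnj[OF this] z(1) show ?thesis by (intro exI[of _ "cnj z"]) simp
  qed
qed

lemma stable_gen:
  fixes a \<tau> :: real and w z :: complex
  assumes w: "w \<noteq> 0" and t: "\<tau> > 0" and a: "a > - cmod w"
    and F0: "Fc (cmod w) a \<tau> 0 < \<bar>Arg w\<bar>"
    and root: "z + complex_of_real a - w * exp (- complex_of_real \<tau> * z) = 0"
  shows "Re z < 0"
proof (rule ccontr)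
  assume re: "\<not> Re z < 0"
  have r: "cmod w > 0" using w by simp
  have b: "\<bar>Arg w\<bar> \<le> pi" using Arg_bounded[of w] by linarith
  show False
  proof (cases "Im z \<ge> 0")
    case True
    have "z + complex_of_real a - complex_of_real (cmod w) * cis (Arg w) * exp (- complex_of_real \<tau> * z) = 0"
      using root w_polar[of w] by metis
    from no_root[OF r t a b F0 _ True this] re show False by simp
  next
    case False
    have "cnj z + complex_of_real a - complex_of_real (cmod w) * cis (- Arg w) * exp (- complex_of_real \<tau> * cnj z) = 0"
      using root_cnj[OF root] wc_polar[of w] by metis
    from no_root[OF r t a _ _ _ _ this] b F0 re False show False by simp
  qed
qed

lemma Fc0: "r > 0 \<Longrightarrow> Fc r a \<tau> 0 = arccos (max (-1) (min 1 (a/r))) + \<tau> * sqrt (max 0 (r^2 - a^2))"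
  by (simp add: Fc_def)

lemma regionA:
  fixes a :: real and w :: complex
  assumes A: "a \<le> Re w" and t: "\<tau> > 0"
  shows "\<exists>z. Re z \<ge> 0 \<and> z + complex_of_real a - w * exp (- complex_of_real \<tau> * z) = 0"
proof (cases "w = 0")
  case True
  then show ?thesis using A by (intro exI[of _ "- complex_of_real a"]) simp
next
  case False
  define r where "r = cmod w"
  have r: "r > 0" using False by (simp add: r_def)
  have ar: "a \<le> r" using A complex_Re_le_cmod[of w] by (simp add: r_def)
  have cA: "cos \<bar>Arg w\<bar> = Re w / r" using cos_Arg[OF False] by (simp add: r_def)
  have Ab: "0 \<le> \<bar>Arg w\<bar>" "\<bar>Arg w\<bar> \<le> pi" using Arg_bounded[of w] by auto
  have ar2: "a / r \<le> Re w / r" by (rule divide_right_mono[OF A]) (use r in simp)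
  have cl: "max (-1) (min 1 (a/r)) \<le> cos \<bar>Arg w\<bar>"
    using ar2 cA cos_ge_minus_one[of "\<bar>Arg w\<bar>"] by (auto simp: max_def min_def)
  have cl2: "-1 \<le> max (-1) (min 1 (a/r))" by simp
  have e1: "\<bar>Arg w\<bar> = arccos (cos \<bar>Arg w\<bar>)" by (rule arccos_cos[OF Ab, symmetric])
  have e2: "arccos (cos \<bar>Arg w\<bar>) \<le> arccos (max (-1) (min 1 (a/r)))"
    by (rule arccos_le_arccos[OF cl2 cl cos_le_one])
  have e3: "0 \<le> \<tau> * sqrt (max 0 (r^2 - a^2))" using t by simp
  have F0: "\<bar>Arg w\<bar> \<le> Fc r a \<tau> 0" using Fc0[OF r, of a \<tau>] e1 e2 e3 by linarith
  show ?thesis by (rule unstable_gen[OF False t]) (use ar F0 in \<open>simp_all add: r_def\<close>)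
qed

lemma regionC:
  fixes a :: real and w z :: complex
  assumes C1: "a \<ge> cmod w" and C2: "a > Re w" and t: "\<tau> > 0"
    and root: "z + complex_of_real a - w * exp (- complex_of_real \<tau> * z) = 0"
  shows "Re z < 0"
proof (rule ccontr)
  assume "\<not> Re z < 0"
  then have x: "Re z \<ge> 0" by simp
  have eq: "z + complex_of_real a = w * exp (- complex_of_real \<tau> * z)" using root by simp
  have "cmod (z + complex_of_real a) = cmod w * exp (- \<tau> * Re z)"
    using eq by (simp add: norm_mult)
  also have "\<dots> \<le> cmod w" using x t by (simp add: mult_left_le)
  finally have n: "cmod (z + complex_of_real a) \<le> cmod w" .
  have "Re z + a \<le> cmod (z + complex_of_real a)" using complex_Re_le_cmod[of "z + complex_of_real a"] by simp
  with n C1 x have x0: "Re z = 0" and na: "cmod (z + complex_of_real a) = a" by linarith+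
  have "(cmod (z + complex_of_real a))^2 = (Re z + a)^2 + (Im z)^2"
    by (simp add: cmod_power2)
  then have "Im z = 0" using x0 na by simp
  with x0 have "z = 0" by (simp add: complex_eq_iff)
  then have "complex_of_real a = w" using eq by simp
  then show False using C2 by auto
qed

lemma regionB:
  fixes a \<tau> :: real and w :: complex
  assumes B1: "Re w < a" and B2: "a < cmod w" and t: "\<tau> > 0"
  defines "\<tau>c \<equiv> (1 / sqrt ((cmod w)\<^sup>2 - a\<^sup>2)) * (\<bar>Arg w\<bar> - arccos (a / cmod w))"
  shows "\<tau>c > 0"
    and "(\<forall>z. z + complex_of_real a - w * exp (- complex_of_real \<tau> * z) = 0 \<longrightarrow> Re z < 0) \<longleftrightarrow> \<tau> < \<tau>c"
proof -
  define r where "r = cmod w"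
  have w: "w \<noteq> 0" using B1 B2 complex_Re_le_cmod[of w] by auto
  have r: "r > 0" using w by (simp add: r_def)
  have a1: "-r < a" using B1 abs_Re_le_cmod[of w] by (simp add: r_def abs_le_iff)
  have a2: "a < r" using B2 by (simp add: r_def)
  have rr: "r^2 - a^2 > 0"
  proof -
    have "r^2 - a^2 = (r-a)*(r+a)" by (simp add: power2_eq_square algebra_simps)
    moreover have "(r-a)*(r+a) > 0" using a1 a2 by simp
    ultimately show ?thesis by simp
  qed
  define \<omega> where "\<omega> = sqrt (r^2 - a^2)"
  have om: "\<omega> > 0" using rr by (simp add: \<omega>_def)
  have u1: "-1 < a/r" "a/r < 1" using a1 a2 r by (auto simp: field_simps)
  define \<alpha> where "\<alpha> = arccos (a/r)"
  have al: "0 < \<alpha>" "\<alpha> < pi" using arccos_lt_bounded[OF u1] by (auto simp: \<alpha>_def)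
  have F0: "Fc r a \<tau> 0 = \<alpha> + \<tau> * \<omega>"
    using Fc0[OF r, of a \<tau>] u1 rr by (simp add: \<alpha>_def \<omega>_def)
  have tc: "\<tau>c = (\<bar>Arg w\<bar> - \<alpha>) / \<omega>" by (simp add: \<tau>c_def r_def \<alpha>_def \<omega>_def)
  have cA: "cos \<bar>Arg w\<bar> = Re w / r" using cos_Arg[OF w] by (simp add: r_def)
  have Ab: "0 \<le> \<bar>Arg w\<bar>" "\<bar>Arg w\<bar> \<le> pi" using Arg_bounded[of w] by auto
  have "cos \<bar>Arg w\<bar> < cos \<alpha>" using cA B1 r u1 by (simp add: \<alpha>_def divide_strict_right_mono)
  then have gt: "\<alpha> < \<bar>Arg w\<bar>" using cos_mono_less_eq[of "\<bar>Arg w\<bar>" \<alpha>] Ab al by simp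
  show "\<tau>c > 0" using tc gt om by simp
  have iff: "\<tau> < \<tau>c \<longleftrightarrow> Fc r a \<tau> 0 < \<bar>Arg w\<bar>"
    using om by (simp add: tc F0 field_simps)
  show "(\<forall>z. z + complex_of_real a - w * exp (- complex_of_real \<tau> * z) = 0 \<longrightarrow> Re z < 0) \<longleftrightarrow> \<tau> < \<tau>c"
  proof
    assume H: "\<forall>z. z + complex_of_real a - w * exp (- complex_of_real \<tau> * z) = 0 \<longrightarrow> Re z < 0"
    show "\<tau> < \<tau>c"
    proof (rule ccontr)
      assume "\<not> \<tau> < \<tau>c"
      then have "\<bar>Arg w\<bar> \<le> Fc (cmod w) a \<tau> 0" using iff by (simp add: r_def)
      from unstable_gen[OF w t _ this] a2 H show False by (force simp: r_def)
    qed
  next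
    assume "\<tau> < \<tau>c"
    then have "Fc (cmod w) a \<tau> 0 < \<bar>Arg w\<bar>" using iff by (simp add: r_def)
    then show "\<forall>z. z + complex_of_real a - w * exp (- complex_of_real \<tau> * z) = 0 \<longrightarrow> Re z < 0"
      using stable_gen[OF w t] a1 by (simp add: r_def)
  qed
qed
theorem mainTheorem1:
  fixes a :: real and w :: complex
  defines "T \<equiv> stab_delays (complex_of_real a) w"
  defines "\<tau>c \<equiv> (1 / sqrt ((cmod w)\<^sup>2 - a\<^sup>2)) * (\<bar>Arg w\<bar> - arccos (a / cmod w))"
  shows "(T = {0<..} \<longleftrightarrow> a \<ge> cmod w \<and> a > Re w)
    \<and> ((T \<noteq> {} \<and> T \<subset> {0<..}) \<longleftrightarrow> w \<noteq> 0 \<and> Re w < a \<and> a < cmod w)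
    \<and> (w \<noteq> 0 \<and> Re w < a \<and> a < cmod w \<longrightarrow>
         T = {0<..<\<tau>c}
         \<and> \<tau>c = (1 / sqrt ((cmod w)\<^sup>2 - a\<^sup>2)) *
                (\<bar>Arg w\<bar> - arccot (a / sqrt ((cmod w)\<^sup>2 - a\<^sup>2)))
         \<and> \<tau>c > 0)
    \<and> (T = {} \<longleftrightarrow> a \<le> Re w)"
proof -
  have Tdef: "T = {\<tau>. \<tau> > 0 \<and> (\<forall>z. z + complex_of_real a - w * exp (- complex_of_real \<tau> * z) = 0 \<longrightarrow> Re z < 0)}"
    by (simp add: T_def stab_delays_def)
  have A: "T = {}" if "a \<le> Re w"
  proof -
    have "\<tau> \<notin> T" for \<tau>
    proof
      assume "\<tau> \<in> T"
      then have t: "\<tau> > 0" and H: "\<forall>z. z + complex_of_real a - w * exp (- complex_of_real \<tau> * z) = 0 \<longrightarrow> Re z < 0"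
        by (auto simp: Tdef)
      from regionA[OF that t] H show False by force
    qed
    then show ?thesis by blast
  qed
  have C: "T = {0<..}" if "cmod w \<le> a" "Re w < a"
    using regionC[OF that] by (auto simp: Tdef)
  have mem: "\<tau> \<in> T \<longleftrightarrow> \<tau> > 0 \<and> (\<forall>z. z + complex_of_real a - w * exp (- complex_of_real \<tau> * z) = 0 \<longrightarrow> Re z < 0)" for \<tau>
    unfolding Tdef by (rule mem_Collect_eq)
  have B: "T = {0<..<\<tau>c} \<and> \<tau>c > 0" if "Re w < a" "a < cmod w"
  proof -
    have rb1: "\<tau>c > 0" using regionB(1)[OF that zero_less_one] unfolding \<tau>c_def .
    have rb: "(\<forall>z. z + complex_of_real a - w * exp (- complex_of_real \<tau> * z) = 0 \<longrightarrow> Re z < 0) \<longleftrightarrow> \<tau> < \<tau>c"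
      if "\<tau> > 0" for \<tau>
      using regionB(2)[OF \<open>Re w < a\<close> \<open>a < cmod w\<close> that] unfolding \<tau>c_def .
    have "\<tau> \<in> T \<longleftrightarrow> \<tau> \<in> {0<..<\<tau>c}" for \<tau>
    proof (cases "\<tau> > 0")
      case True
      then show ?thesis using mem[of \<tau>] rb[OF True] by simp
    next
      case False
      then show ?thesis using mem[of \<tau>] by simp
    qed
    then have "T = {0<..<\<tau>c}" by blast
    then show ?thesis using rb1 by simp
  qed
  have wB: "w \<noteq> 0" if "Re w < a" "a < cmod w" using that by auto
  have arc: "\<tau>c = (1 / sqrt ((cmod w)\<^sup>2 - a\<^sup>2)) * (\<bar>Arg w\<bar> - arccot (a / sqrt ((cmod w)\<^sup>2 - a\<^sup>2)))"
    if "Re w < a" "a < cmod w"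
  proof -
    have "- cmod w < a" using that abs_Re_le_cmod[of w] by (simp add: abs_le_iff)
    then show ?thesis using arccot_eq[of "cmod w" a] that wB[OF that] by (simp add: \<tau>c_def)
  qed
  have ne: "{0<..} \<noteq> ({}::real set)" by auto
  have tcp: "\<tau>c \<in> {0<..}" if "\<tau>c > 0" using that by simp
  consider (RA) "a \<le> Re w" | (RB) "Re w < a" "a < cmod w" | (RC) "cmod w \<le> a" "Re w < a" by linarith
  then show ?thesis
  proof cases
    case RA
    have T: "T = {}" using A[OF RA] .
    have c1: "\<not> (a \<ge> cmod w \<and> a > Re w)" using RA by simp
    have c2: "\<not> (w \<noteq> 0 \<and> Re w < a \<and> a < cmod w)" using RA by simp
    show ?thesis
      apply (intro conjI)
      using T ne c1 apply blast
      using T c2 apply blast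
      using c2 apply blast
      using T RA apply blast
      done
  next
    case RB
    from B[OF RB] have T: "T = {0<..<\<tau>c}" and tp: "\<tau>c > 0" by auto
    have n1: "T \<noteq> {0<..}"
    proof
      assume "T = {0<..}"
      then have "\<tau>c \<in> T" using tp by simp
      then show False using T by simp
    qed
    have n2: "T \<noteq> {}" using T tp by (simp add: T)
    have n3: "T \<subset> {0<..}" using T n1 by auto
    have c4: "\<not> a \<le> Re w" using RB by simp
    have c1: "\<not> (a \<ge> cmod w \<and> a > Re w)" using RB by simp
    show ?thesis
      apply (intro conjI)
      using n1 c1 apply blast
      using n2 n3 RB wB[OF RB] apply blast
      using T arc[OF RB] tp apply blast
      using n2 c4 apply blast
      done
  next
    case RC
    have T: "T = {0<..}" using C[OF RC] .
    have c2: "\<not> (w \<noteq> 0 \<and> Re w < a \<and> a < cmod w)" using RC by simp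
    have c4: "\<not> a \<le> Re w" using RC by simp
    have one_in: "(1::real) \<in> T" using T by simp
    show ?thesis
      apply (intro conjI)
      using T RC apply blast
      using T c2 apply blast
      using c2 apply blast
      using one_in c4 apply blast
      done
  qed
qed

end
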